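(* Let $\mathcal{U}$ be a free ultrafilter on $\mathbb{N}$. If $\{2^{(2^k)} : k \in \mathbb{N},\ k \text{ odd}\} \in \mathcal{U}$, then $$\alpha - \sqrt{\alpha} \;<\; \mathrm{num}_{\mathcal{U}}(\mathbb{S}) \;<\; \alpha - \sqrt{\alpha} + \alpha^{1/4}.$$ If $\{2^{(2^k)} : k \in \mathbb{N},\ k \text{ even}\} \in \mathcal{U}$, then $$\sqrt{\alpha} - \alpha^{1/4} \;<\; \mathrm{num}_{\mathcal{U}}(\mathbb{S}) \;<\; \sqrt{\alpha}.$$
   Context: $\mathbb{N} = \{1,2,3,\ldots\}$; for $S \subseteq \mathbb{N}$, $f_n(S) = |S \cap \{1,\ldots,n\}|$. The set $\mathbb{S}$ is defined by: $n \in \mathbb{S}$ iff $n \geq 2$ and $\lceil \log_2(\log_2 n)\rceil$ is odd. Given a free ultrafilter $\mathcal{U}$ on $\mathbb{N}$, let ${}^*\mathbb{R} = \mathbb{R}^{\mathbb{N}}/\mathcal{U}$ be the ultrapower: elements are classes $[(x_n)]$ of real sequences with $[(x_n)] = [(y_n)]$ iff $\{n : x_n = y_n\} \in \mathcal{U}$, operations componentwise, and $[(x_n)] < [(y_n)]$ iff $\{n : x_n < y_n\} \in \mathcal{U}$. Set $\alpha = [(n)_n]$, $\sqrt{\alpha} = [(n^{1/2})_n]$, $\alpha^{1/4} = [(n^{1/4})_n]$, and $\mathrm{num}_{\mathcal{U}}(S) = [(f_n(S))_n]$ (the $\alpha$-numerosity of $S$). *)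

theory Defs
  imports Complex_Main
begin

definition free_ultrafilter :: "nat set set \<Rightarrow> bool" where
  "free_ultrafilter U \<longleftrightarrow>
     {} \<notin> U \<and> UNIV \<in> U \<and>
     (\<forall>A B. A \<in> U \<and> A \<subseteq> B \<longrightarrow> B \<in> U) \<and>
     (\<forall>A B. A \<in> U \<and> B \<in> U \<longrightarrow> A \<inter> B \<in> U) \<and>
     (\<forall>A. A \<in> U \<or> - A \<in> U) \<and>
     (\<forall>A. finite A \<longrightarrow> A \<notin> U)"

text \<open>Order of the ultrapower R^N/U on representing sequences:
  [x] < [y] iff the set of indices n with x n < y n belongs to U.\<close>
definition ult_less :: "nat set set \<Rightarrow> (nat \<Rightarrow> real) \<Rightarrow> (nat \<Rightarrow> real) \<Rightarrow> bool" where
  "ult_less U x y \<longleftrightarrow> {n. x n < y n} \<in> U"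

definition count_upto :: "nat set \<Rightarrow> nat \<Rightarrow> nat" where
  "count_upto S n = card (S \<inter> {1..n})"

definition setS :: "nat set" where
  "setS = {n. n \<ge> 2 \<and> odd (\<lceil>log 2 (log 2 (real n))\<rceil>)}"

text \<open>alpha-numerosity of S, as a representing sequence.\<close>
definition num_seq :: "nat set \<Rightarrow> nat \<Rightarrow> real" where
  "num_seq S = (\<lambda>n. real (count_upto S n))"

end

theory Submission imports Defs begin

definition P :: "nat \<Rightarrow> nat" where "P k = 2 ^ (2 ^ k)"

lemma P_sq: "P (Suc k) = P k * P k"
  by (simp add: P_def power_mult[symmetric] power2_eq_square[symmetric] mult.commute)

lemma P_ge2: "P k \<ge> 2"
proof -
  have "(2::nat) ^ 1 \<le> 2 ^ (2^k)" by (rule power_increasing) auto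
  thus ?thesis by (simp add: P_def)
qed

lemma P_mono: "P k < P (Suc k)"
  unfolding P_def by (rule power_strict_increasing) auto

lemma ceil_lem:
  assumes "P k < m" "m \<le> P (Suc k)"
  shows "\<lceil>log 2 (log 2 (real m))\<rceil> = int (Suc k)"
proof -
  have m0: "real m > 0" using assms P_ge2[of k] by simp
  have "log 2 (real m) > log 2 (real (P k))"
    using assms(1) P_ge2[of k] by (subst log_less_cancel_iff) auto
  hence l1: "log 2 (real m) > 2 ^ k" by (simp add: log_nat_power P_def)
  have "log 2 (real m) \<le> log 2 (real (P (Suc k)))"
    using assms(2) m0 by (subst log_le_cancel_iff) auto
  hence l2: "log 2 (real m) \<le> 2 ^ Suc k" by (simp add: log_nat_power P_def del: power_Suc)
  have lpos: "log 2 (real m) > 0" using l1 zero_less_power[of "2::real" k] by linarith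
  have "log 2 (log 2 (real m)) > log 2 (2^k)"
    using l1 lpos by (subst log_less_cancel_iff) auto
  hence a: "log 2 (log 2 (real m)) > k" by simp
  have "log 2 (log 2 (real m)) \<le> log 2 (2^Suc k)"
    using lpos l2 by (subst log_le_cancel_iff) auto
  hence b: "log 2 (log 2 (real m)) \<le> Suc k" by (simp del: power_Suc)
  show ?thesis using a b by (subst ceiling_eq_iff) auto
qed

lemma mem_lem:
  assumes "P k < m" "m \<le> P (Suc k)"
  shows "m \<in> setS \<longleftrightarrow> odd (Suc k)"
proof -
  have "m \<ge> 2" using assms P_ge2[of k] by simp
  thus ?thesis using ceil_lem[OF assms] unfolding setS_def by simp
qed

definition c :: "nat \<Rightarrow> nat" where "c k = count_upto setS (P k)"

lemma c0: "c 0 = 0"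
proof -
  have "setS \<inter> {1..2} = {}"
    unfolding setS_def by (auto simp: le_Suc_eq)
  thus ?thesis by (simp add: c_def count_upto_def P_def)
qed

lemma c_Suc: "c (Suc k) = c k + (if odd (Suc k) then P (Suc k) - P k else 0)"
proof -
  have split: "setS \<inter> {1..P (Suc k)} = (setS \<inter> {1..P k}) \<union> (setS \<inter> {P k<..P (Suc k)})"
    using P_mono[of k] by auto
  have "setS \<inter> {P k<..P (Suc k)} = (if odd (Suc k) then {P k<..P (Suc k)} else {})"
    using mem_lem[of k] by auto
  moreover have "card (setS \<inter> {1..P (Suc k)}) = card (setS \<inter> {1..P k}) + card (setS \<inter> {P k<..P (Suc k)})"
    unfolding split by (rule card_Un_disjoint) auto
  ultimately show ?thesis by (simp add: c_def count_upto_def)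
qed

lemma c_upper: "c k + 2 \<le> P k"
proof (induction k)
  case 0 thus ?case by (simp add: c0 P_def)
next
  case (Suc k) thus ?case using P_mono[of k] by (simp add: c_Suc) linarith
qed

lemma c_mono: "c k \<le> c (Suc k)" by (simp add: c_Suc)

lemma c_pos: "k \<ge> 1 \<Longrightarrow> c k > 0"
proof (induction k)
  case 0 thus ?case by simp
next
  case (Suc k)
  show ?case
  proof (cases "k = 0")
    case True thus ?thesis by (simp add: c_Suc c0 P_def)
  next
    case False thus ?thesis using Suc c_mono[of k] by simp
  qed
qed


lemma sqrtP: "sqrt (real (P (Suc k))) = real (P k)"
  by (simp add: P_sq real_sqrt_mult)

lemma powrP: "real (P (Suc (Suc k))) powr (1/4) = real (P k)"
proof -
  have pos: "real (P k) > 0" using P_ge2[of k] by simp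
  have e4: "real (P k) powr 4 = real (P k) * real (P k) * (real (P k) * real (P k))"
    using pos by (simp add: powr_numeral power4_eq_xxxx)
  have "real (P (Suc (Suc k))) = real (P k) powr 4"
    unfolding e4 by (simp add: P_sq)
  hence "real (P (Suc (Suc k))) powr (1/4) = real (P k) powr (4 * (1/4))"
    by (simp only: powr_powr)
  thus ?thesis using pos by simp
qed

lemma ult_lem:
  assumes U: "free_ultrafilter U" and A: "A \<in> U" and F: "finite F" and sub: "A - F \<subseteq> B"
  shows "B \<in> U"
proof -
  have "F \<notin> U" using U F unfolding free_ultrafilter_def by blast
  hence "- F \<in> U" using U unfolding free_ultrafilter_def by blast
  hence "A \<inter> - F \<in> U" using U A unfolding free_ultrafilter_def by blast
  moreover have "A \<inter> - F \<subseteq> B" using sub by blast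
  ultimately show ?thesis using U unfolding free_ultrafilter_def by blast
qed

lemma num_P: "num_seq setS (P k) = real (c k)"
  by (simp add: num_seq_def c_def)

lemma odd_case:
  assumes "odd k" "k \<ge> 3"
  shows "real (P k) - sqrt (real (P k)) < num_seq setS (P k) \<and>
         num_seq setS (P k) < real (P k) - sqrt (real (P k)) + real (P k) powr (1/4)"
proof -
  obtain j where k: "k = Suc (Suc j)" and j: "odd j" "j \<ge> 1"
  proof -
    have "k - 2 \<ge> 1" "odd (k - 2)" using assms by auto
    moreover have "k = Suc (Suc (k - 2))" using assms by simp
    ultimately show ?thesis using that by blast
  qed
  have ck: "c (Suc (Suc j)) = c j + (P (Suc (Suc j)) - P (Suc j))" using j by (simp add: c_Suc)
  have "P (Suc j) < P (Suc (Suc j))" using P_mono[of "Suc j"] by simp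
  hence ck': "real (c (Suc (Suc j))) = real (c j) + real (P (Suc (Suc j))) - real (P (Suc j))" using ck by simp
  have "c j > 0" using c_pos j by simp
  moreover have "c j + 2 \<le> P j" by (rule c_upper)
  ultimately show ?thesis
    by (simp add: num_P ck' k sqrtP powrP)
qed

lemma even_case:
  assumes "even k" "k \<ge> 4"
  shows "sqrt (real (P k)) - real (P k) powr (1/4) < num_seq setS (P k) \<and>
         num_seq setS (P k) < sqrt (real (P k))"
proof -
  obtain j where k: "k = Suc (Suc (Suc j))" and j: "odd j" "j \<ge> 1"
  proof -
    have "k - 3 \<ge> 1" "odd (k - 3)" using assms by auto
    moreover have "k = Suc (Suc (Suc (k - 3)))" using assms by simp
    ultimately show ?thesis using that by blast
  qed
  have ck: "c (Suc (Suc (Suc j))) = c j + (P (Suc (Suc j)) - P (Suc j))" using j by (simp add: c_Suc)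
  have "P (Suc j) < P (Suc (Suc j))" using P_mono[of "Suc j"] by simp
  hence ck': "real (c (Suc (Suc (Suc j)))) = real (c j) + real (P (Suc (Suc j))) - real (P (Suc j))" using ck by simp
  have "c j > 0" using c_pos j by simp
  moreover have "c j + 2 \<le> P j" by (rule c_upper)
  moreover have "P j < P (Suc j)" by (rule P_mono)
  ultimately show ?thesis
    by (simp add: num_P ck' k sqrtP powrP)
qed

theorem mainTheorem5:
  fixes U :: "nat set set"
  assumes U: "free_ultrafilter U"
  shows "({2 ^ (2 ^ k) | k::nat. k \<ge> 1 \<and> odd k} \<in> U \<longrightarrow>
           ult_less U (\<lambda>n. real n - sqrt (real n)) (num_seq setS) \<and>
           ult_less U (num_seq setS) (\<lambda>n. real n - sqrt (real n) + real n powr (1/4)))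
       \<and> ({2 ^ (2 ^ k) | k::nat. k \<ge> 1 \<and> even k} \<in> U \<longrightarrow>
           ult_less U (\<lambda>n. sqrt (real n) - real n powr (1/4)) (num_seq setS) \<and>
           ult_less U (num_seq setS) (\<lambda>n. sqrt (real n)))"
proof (intro conjI impI)
  let ?A = "{2 ^ (2 ^ k) | k::nat. k \<ge> 1 \<and> odd k}"
  let ?B = "{2 ^ (2 ^ k) | k::nat. k \<ge> 1 \<and> even k}"
  have fin: "finite {P 1}" "finite {P 2}" by auto
  have Pinj: "P a = P b \<Longrightarrow> a = b" for a b
    using P_def power_inject_exp[of "2::nat"] by (metis Suc_1 lessI one_less_numeral_iff semiring_norm(76))
  {
    assume A: "?A \<in> U"
    have key: "n \<in> ?A - {P 1} \<Longrightarrow> real n - sqrt (real n) < num_seq setS n \<and>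
         num_seq setS n < real n - sqrt (real n) + real n powr (1/4)" for n
    proof -
      assume "n \<in> ?A - {P 1}"
      then obtain k where n: "n = P k" "k \<ge> 1" "odd k" "P k \<noteq> P 1" by (auto simp: P_def)
      hence "k \<noteq> 1" by auto
      with n have "k \<ge> 3" by presburger
      thus ?thesis using odd_case[of k] n by simp
    qed
    show "ult_less U (\<lambda>n. real n - sqrt (real n)) (num_seq setS)"
      unfolding ult_less_def by (rule ult_lem[OF U A fin(1)]) (use key in blast)
    show "ult_less U (num_seq setS) (\<lambda>n. real n - sqrt (real n) + real n powr (1/4))"
      unfolding ult_less_def by (rule ult_lem[OF U A fin(1)]) (use key in blast)
  }
  {
    assume A: "?B \<in> U"
    have key: "n \<in> ?B - {P 2} \<Longrightarrow> sqrt (real n) - real n powr (1/4) < num_seq setS n \<and>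
         num_seq setS n < sqrt (real n)" for n
    proof -
      assume "n \<in> ?B - {P 2}"
      then obtain k where n: "n = P k" "k \<ge> 1" "even k" "P k \<noteq> P 2" by (auto simp: P_def)
      hence "k \<noteq> 2" by auto
      with n have "k \<ge> 4" by presburger
      thus ?thesis using even_case[of k] n by simp
    qed
    show "ult_less U (\<lambda>n. sqrt (real n) - real n powr (1/4)) (num_seq setS)"
      unfolding ult_less_def by (rule ult_lem[OF U A fin(2)]) (use key in blast)
    show "ult_less U (num_seq setS) (\<lambda>n. sqrt (real n))"
      unfolding ult_less_def by (rule ult_lem[OF U A fin(2)]) (use key in blast)
  }
qed

end
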